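(* Let $0<t\le k<n$, $w=n-k$, $M=\binom{n}{t}/\binom{k}{t}$, and suppose $C$ is an $(n,w,n-t+1)_q$ code of size $M$. Then: (i) $C$ is a diameter perfect code in $J_q(n,w)$ (it attains $|C|\cdot|A''_q(n,w,t)|=|J_q(n,w)|$); (ii) the complements (in $[n]$) of the supports of the codewords of $C$ are the blocks of a Steiner system $S(t,k,n)$; (iii) setting $$R=\frac{\binom{n}{t}}{\binom{k}{t}}-\frac{\binom{n-1}{t-1}}{\binom{k-1}{t-1}},\quad a=\Big\lfloor\frac{R}{q-1}\Big\rfloor,\quad b=R-a(q-1),\quad \widetilde P=\frac{M}{2n}\sum_{i=0}^{t-2}(t-1-i)\Lambda_i(t,k,n),$$ it holds that $(q-1)\binom{a}{2}+ba\le\lfloor\widetilde P\rfloor$; (iii') in particular, $q-1\ge R-\lfloor\widetilde P\rfloor$.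
   Context: $\mathbb{Z}_q=\{0,\dots,q-1\}$ (an alphabet); $\mathrm{supp}(x)$ = set of nonzero coordinates, $\mathrm{wt}=|\mathrm{supp}|$; $d$ = Hamming distance; $J_q(n,w)$ = weight-$w$ words of $\mathbb{Z}_q^n$. An $(n,w,d)_q$ code of size $M$ is a subset $C\subseteq J_q(n,w)$ with $|C|=M$ and pairwise distances at least $d$; it is diameter perfect if $|C|\cdot|A|=|J_q(n,w)|$ for some anticode $A$ (set with all pairwise distances at most $D$) of diameter $D<d$. $A''_q(n,w,t)=\{a\in\mathbb{Z}_q^n: a_1=\dots=a_t=0,\ \mathrm{wt}((a_{t+1},\dots,a_n))=w\}$, an anticode of diameter $n-t$. A Steiner system $S(t,k,n)$ is a pair $(N,B)$, $|N|=n$, $B$ a set of $k$-subsets (blocks) with every $t$-subset in exactly one block. $\Lambda_i(t,k,n)=\binom{k}{i}\lambda_{i,k-i}$ (the number of blocks of an $S(t,k,n)$ meeting a fixed block in exactly $i$ points), where $\lambda_{i,j}$ ($0\le i+j\le k$) are defined by $\lambda_{i,0}=\binom{n-i}{t-i}/\binom{k-i}{t-i}$ for $0\le i\le t$, $\lambda_{i,0}=1$ for $t<i\le k$, and $\lambda_{i,j}=\lambda_{i,j-1}-\lambda_{i+1,j-1}$ for $0\le i<i+j\le k$. *)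

theory Defs
  imports Complex_Main
begin

text \<open>Words of length n over the alphabet Z_q = {0..q-1}, coordinates indexed 0..n-1,
  represented as functions nat => nat that vanish outside {0..<n}.\<close>

definition words :: "nat \<Rightarrow> nat \<Rightarrow> (nat \<Rightarrow> nat) set" where
  "words q n = {x. (\<forall>i<n. x i < q) \<and> (\<forall>i\<ge>n. x i = 0)}"

definition supp :: "nat \<Rightarrow> (nat \<Rightarrow> nat) \<Rightarrow> nat set" where
  "supp n x = {i\<in>{..<n}. x i \<noteq> 0}"

definition wt :: "nat \<Rightarrow> (nat \<Rightarrow> nat) \<Rightarrow> nat" where
  "wt n x = card (supp n x)"

definition hdist :: "nat \<Rightarrow> (nat \<Rightarrow> nat) \<Rightarrow> (nat \<Rightarrow> nat) \<Rightarrow> nat" where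
  "hdist n x y = card {i\<in>{..<n}. x i \<noteq> y i}"

definition J :: "nat \<Rightarrow> nat \<Rightarrow> nat \<Rightarrow> (nat \<Rightarrow> nat) set" where
  "J q n w = {x\<in>words q n. wt n x = w}"

definition const_weight_code :: "nat \<Rightarrow> nat \<Rightarrow> nat \<Rightarrow> nat \<Rightarrow> (nat \<Rightarrow> nat) set \<Rightarrow> bool" where
  "const_weight_code q n w d C \<longleftrightarrow> C \<subseteq> J q n w \<and>
     (\<forall>x\<in>C. \<forall>y\<in>C. x \<noteq> y \<longrightarrow> d \<le> hdist n x y)"

definition anticode :: "nat \<Rightarrow> nat \<Rightarrow> nat \<Rightarrow> nat \<Rightarrow> (nat \<Rightarrow> nat) set \<Rightarrow> bool" where
  "anticode q n w D A \<longleftrightarrow> A \<subseteq> J q n w \<and> (\<forall>x\<in>A. \<forall>y\<in>A. hdist n x y \<le> D)"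

definition diameter_perfect :: "nat \<Rightarrow> nat \<Rightarrow> nat \<Rightarrow> nat \<Rightarrow> (nat \<Rightarrow> nat) set \<Rightarrow> bool" where
  "diameter_perfect q n w d C \<longleftrightarrow> const_weight_code q n w d C \<and>
     (\<exists>A D. anticode q n w D A \<and> D < d \<and> card C * card A = card (J q n w))"

definition A2 :: "nat \<Rightarrow> nat \<Rightarrow> nat \<Rightarrow> nat \<Rightarrow> (nat \<Rightarrow> nat) set" where
  "A2 q n w t = {a\<in>words q n. (\<forall>i<t. a i = 0) \<and> card {i. t \<le> i \<and> i < n \<and> a i \<noteq> 0} = w}"

definition steiner :: "nat \<Rightarrow> nat \<Rightarrow> nat \<Rightarrow> 'a set \<Rightarrow> 'a set set \<Rightarrow> bool" where
  "steiner t k n N B \<longleftrightarrow> finite N \<and> card N = n \<and> (\<forall>b\<in>B. b \<subseteq> N \<and> card b = k) \<and>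
     (\<forall>T. T \<subseteq> N \<and> card T = t \<longrightarrow> (\<exists>!b. b \<in> B \<and> T \<subseteq> b))"

text \<open>lambda_{i,j} for S(t,k,n); only meaningful for 0 <= i+j <= k.\<close>
fun lam :: "nat \<Rightarrow> nat \<Rightarrow> nat \<Rightarrow> nat \<Rightarrow> nat \<Rightarrow> real" where
  "lam t k n i 0 = (if i \<le> t then real ((n - i) choose (t - i)) / real ((k - i) choose (t - i)) else 1)"
| "lam t k n i (Suc j) = lam t k n i j - lam t k n (Suc i) j"

definition Lam :: "nat \<Rightarrow> nat \<Rightarrow> nat \<Rightarrow> nat \<Rightarrow> real" where
  "Lam t k n i = real (k choose i) * lam t k n i (k - i)"

end

theory Submission
  imports Defs "HOL-Library.FuncSet"
begin

lemma g2: "(x::real) gchoose 2 = x*(x-1)/2"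
  by (simp add: gbinomial_Suc numeral_2_eq_2 atLeast0_atMost_Suc)
lemma ext_count:
  assumes "finite A" "I \<subseteq> A" "card I \<le> m"
  shows "card {T. I \<subseteq> T \<and> T \<subseteq> A \<and> card T = m} = (card A - card I) choose (m - card I)"
proof -
  have fI: "finite I" using assms finite_subset by blast
  have "bij_betw (\<lambda>T. T - I) {T. I \<subseteq> T \<and> T \<subseteq> A \<and> card T = m} {S. S \<subseteq> A - I \<and> card S = m - card I}"
  proof (rule bij_betw_byWitness[where f'="\<lambda>S. S \<union> I"])
    show "\<forall>a\<in>{T. I \<subseteq> T \<and> T \<subseteq> A \<and> card T = m}. a - I \<union> I = a" by auto
    show "\<forall>a'\<in>{S. S \<subseteq> A - I \<and> card S = m - card I}. a' \<union> I - I = a'" by auto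
    show "(\<lambda>T. T - I) ` {T. I \<subseteq> T \<and> T \<subseteq> A \<and> card T = m} \<subseteq> {S. S \<subseteq> A - I \<and> card S = m - card I}"
      using fI by (auto simp: card_Diff_subset)
    show "(\<lambda>S. S \<union> I) ` {S. S \<subseteq> A - I \<and> card S = m - card I} \<subseteq> {T. I \<subseteq> T \<and> T \<subseteq> A \<and> card T = m}"
    proof safe
      fix S assume S: "S \<subseteq> A - I" "card S = m - card I"
      have "finite S" using S assms finite_subset by blast
      then have "card (S \<union> I) = card S + card I" using S fI by (subst card_Un_disjoint) auto
      then show "card (S \<union> I) = m" using S assms(3) by simp
    qed (use assms in auto)
  qed
  then have "card {T. I \<subseteq> T \<and> T \<subseteq> A \<and> card T = m} = card {S. S \<subseteq> A - I \<and> card S = m - card I}"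
    by (rule bij_betw_same_card)
  also have "\<dots> = card (A - I) choose (m - card I)" using assms by (simp add: n_subsets)
  finally show ?thesis using assms fI by (simp add: card_Diff_subset)
qed


locale stsys =
  fixes t k n :: nat and N :: "'a set" and Bs :: "'a set set"
  assumes st: "steiner t k n N Bs" and tpos: "0 < t" and tk: "t \<le> k"
begin

lemma finN: "finite N" and cardN: "card N = n" and blk: "b \<in> Bs \<Longrightarrow> b \<subseteq> N \<and> card b = k"
  and ex1: "T \<subseteq> N \<Longrightarrow> card T = t \<Longrightarrow> \<exists>!b. b \<in> Bs \<and> T \<subseteq> b"
  using st unfolding steiner_def by auto

lemma finB: "finite Bs"
proof -
  have "Bs \<subseteq> Pow N" using blk by auto
  moreover have "finite (Pow N)" using finN by simp
  ultimately show ?thesis using finite_subset by blast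
qed

lemma finb: "b \<in> Bs \<Longrightarrow> finite b"
  using blk finN finite_subset by blast

lemma uniq: "T \<subseteq> N \<Longrightarrow> card T = t \<Longrightarrow> b \<in> Bs \<Longrightarrow> b' \<in> Bs \<Longrightarrow> T \<subseteq> b \<Longrightarrow> T \<subseteq> b' \<Longrightarrow> b = b'"
proof -
  assume a: "T \<subseteq> N" "card T = t" "b \<in> Bs" "b' \<in> Bs" "T \<subseteq> b" "T \<subseteq> b'"
  from ex1[OF a(1,2)] obtain c where "\<And>d. d \<in> Bs \<and> T \<subseteq> d \<Longrightarrow> d = c" by blast
  then show "b = b'" using a by metis
qed

lemma count0:
  assumes "I \<subseteq> N" "card I \<le> t"
  shows "card {b\<in>Bs. I \<subseteq> b} * ((k - card I) choose (t - card I)) = (n - card I) choose (t - card I)"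
proof -
  let ?F = "\<lambda>b. {T. I \<subseteq> T \<and> T \<subseteq> b \<and> card T = t}"
  have eq: "{T. I \<subseteq> T \<and> T \<subseteq> N \<and> card T = t} = (\<Union>b\<in>{b\<in>Bs. I \<subseteq> b}. ?F b)"
  proof
    show "{T. I \<subseteq> T \<and> T \<subseteq> N \<and> card T = t} \<subseteq> (\<Union>b\<in>{b\<in>Bs. I \<subseteq> b}. ?F b)"
    proof
      fix T assume "T \<in> {T. I \<subseteq> T \<and> T \<subseteq> N \<and> card T = t}"
      then have T: "I \<subseteq> T" "T \<subseteq> N" "card T = t" by auto
      then obtain b where "b \<in> Bs" "T \<subseteq> b" using ex1 by blast
      then show "T \<in> (\<Union>b\<in>{b\<in>Bs. I \<subseteq> b}. ?F b)" using T by auto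
    qed
    show "(\<Union>b\<in>{b\<in>Bs. I \<subseteq> b}. ?F b) \<subseteq> {T. I \<subseteq> T \<and> T \<subseteq> N \<and> card T = t}"
      using blk by blast
  qed
  have "card (\<Union>b\<in>{b\<in>Bs. I \<subseteq> b}. ?F b) = (\<Sum>b\<in>{b\<in>Bs. I \<subseteq> b}. card (?F b))"
  proof (rule card_UN_disjoint)
    show "finite {b\<in>Bs. I \<subseteq> b}" using finB by simp
    show "\<forall>i\<in>{b\<in>Bs. I \<subseteq> b}. finite (?F i)"
      using finb by (auto intro: finite_subset[of _ "Pow _"])
    show "\<forall>i\<in>{b \<in> Bs. I \<subseteq> b}. \<forall>j\<in>{b \<in> Bs. I \<subseteq> b}. i \<noteq> j \<longrightarrow> ?F i \<inter> ?F j = {}"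
    proof (intro ballI impI)
      fix b b' assume b: "b \<in> {b\<in>Bs. I \<subseteq> b}" "b' \<in> {b\<in>Bs. I \<subseteq> b}" "b \<noteq> b'"
      show "?F b \<inter> ?F b' = {}"
      proof (rule ccontr)
        assume "?F b \<inter> ?F b' \<noteq> {}"
        then obtain T where T: "T \<subseteq> b" "T \<subseteq> b'" "card T = t" by blast
        have "T \<subseteq> N" using T b blk by blast
        then show False using uniq[OF _ T(3) _ _ T(1,2)] b by blast
      qed
    qed
  qed
  also have "\<dots> = (\<Sum>b\<in>{b\<in>Bs. I \<subseteq> b}. (k - card I) choose (t - card I))"
    by (rule sum.cong[OF refl]) (use ext_count[OF finb] blk assms(2) in auto)
  finally have "card {T. I \<subseteq> T \<and> T \<subseteq> N \<and> card T = t} = (k - card I choose t - card I) * card {b \<in> Bs. I \<subseteq> b}"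
    using eq by simp
  then show ?thesis using ext_count[OF finN assms(1) assms(2)] cardN by (simp add: mult.commute)
qed

lemma count_big:
  assumes "b0 \<in> Bs" "I \<subseteq> b0" "t < card I"
  shows "{b\<in>Bs. I \<subseteq> b} = {b0}"
proof -
  have "t \<le> card I" using assms by simp
  then obtain T where T: "T \<subseteq> I" "card T = t" "finite T" by (rule obtain_subset_with_card_n)
  have "T \<subseteq> N" using T assms blk by blast
  show ?thesis
  proof (rule set_eqI, rule iffI)
    fix b assume "b \<in> {b\<in>Bs. I \<subseteq> b}"
    then have "b \<in> Bs" "T \<subseteq> b" using T by auto
    then have "b = b0" using uniq[OF \<open>T \<subseteq> N\<close> T(2) _ assms(1) _] T assms(2) by blast
    then show "b \<in> {b0}" by simp
  qed (use assms in auto)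
qed

lemma lam_count_aux:
  assumes b0: "b0 \<in> Bs"
  shows "finite Jset \<Longrightarrow> Jset \<subseteq> b0 \<Longrightarrow> I \<subseteq> b0 \<Longrightarrow> I \<inter> Jset = {} \<Longrightarrow>
     real (card {b\<in>Bs. I \<subseteq> b \<and> b \<inter> Jset = {}}) = lam t k n (card I) (card Jset)"
proof (induction Jset arbitrary: I rule: finite_induct)
  case empty
  show ?case
  proof (cases "card I \<le> t")
    case True
    have "I \<subseteq> N" using empty(2) blk[OF b0] by blast
    from count0[OF this True]
    have "real (card {b\<in>Bs. I \<subseteq> b}) * real ((k - card I) choose (t - card I)) = real ((n - card I) choose (t - card I))"
      by (metis of_nat_mult)
    moreover have "(k - card I) choose (t - card I) \<noteq> 0" using True tk by simp
    ultimately show ?thesis using True by (simp add: field_simps)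
  next
    case False
    then show ?thesis using count_big[OF b0 empty(2)] by simp
  qed
next
  case (insert p J')
  have pI: "p \<notin> I" using insert.prems(3) by auto
  have fI: "finite I" using insert.prems(2) finb[OF b0] finite_subset by blast
  have eq: "{b\<in>Bs. I \<subseteq> b \<and> b \<inter> insert p J' = {}} =
     {b\<in>Bs. I \<subseteq> b \<and> b \<inter> J' = {}} - {b\<in>Bs. insert p I \<subseteq> b \<and> b \<inter> J' = {}}" by blast
  have sub: "{b\<in>Bs. insert p I \<subseteq> b \<and> b \<inter> J' = {}} \<subseteq> {b\<in>Bs. I \<subseteq> b \<and> b \<inter> J' = {}}" by auto
  have fin: "finite {b\<in>Bs. I \<subseteq> b \<and> b \<inter> J' = {}}" using finB by simp
  have c1: "card {b\<in>Bs. I \<subseteq> b \<and> b \<inter> insert p J' = {}} =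
     card {b\<in>Bs. I \<subseteq> b \<and> b \<inter> J' = {}} - card {b\<in>Bs. insert p I \<subseteq> b \<and> b \<inter> J' = {}}"
    unfolding eq by (rule card_Diff_subset[OF finite_subset[OF sub fin] sub])
  have c2: "card {b\<in>Bs. insert p I \<subseteq> b \<and> b \<inter> J' = {}} \<le> card {b\<in>Bs. I \<subseteq> b \<and> b \<inter> J' = {}}"
    by (rule card_mono[OF fin sub])
  have i1: "real (card {b\<in>Bs. I \<subseteq> b \<and> b \<inter> J' = {}}) = lam t k n (card I) (card J')"
    by (rule insert.IH) (use insert.prems in auto)
  have i2: "real (card {b\<in>Bs. insert p I \<subseteq> b \<and> b \<inter> J' = {}}) = lam t k n (card (insert p I)) (card J')"
    by (rule insert.IH) (use insert.prems insert.hyps in auto)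
  have "real (card {b\<in>Bs. I \<subseteq> b \<and> b \<inter> insert p J' = {}}) =
     lam t k n (card I) (card J') - lam t k n (card (insert p I)) (card J')"
    using c1 c2 i1 i2 by (simp add: of_nat_diff)
  then show ?case using insert.hyps pI fI by simp
qed

lemma lam_count:
  assumes "b0 \<in> Bs" "Jset \<subseteq> b0" "I \<subseteq> b0" "I \<inter> Jset = {}"
  shows "real (card {b\<in>Bs. I \<subseteq> b \<and> b \<inter> Jset = {}}) = lam t k n (card I) (card Jset)"
  using lam_count_aux[OF assms(1) _ assms(2-4)] finite_subset[OF assms(2) finb[OF assms(1)]] by blast

lemma Lam_count:
  assumes "b0 \<in> Bs"
  shows "real (card {b\<in>Bs. card (b \<inter> b0) = i}) = Lam t k n i"
proof -
  let ?F = "\<lambda>I. {b\<in>Bs. I \<subseteq> b \<and> b \<inter> (b0 - I) = {}}"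
  let ?S = "{I. I \<subseteq> b0 \<and> card I = i}"
  have iff: "\<And>b I. I \<subseteq> b0 \<Longrightarrow> (I \<subseteq> b \<and> b \<inter> (b0 - I) = {}) \<longleftrightarrow> b \<inter> b0 = I" by blast
  have eq: "{b\<in>Bs. card (b \<inter> b0) = i} = (\<Union>I\<in>?S. ?F I)"
  proof
    show "{b\<in>Bs. card (b \<inter> b0) = i} \<subseteq> (\<Union>I\<in>?S. ?F I)" by blast
    show "(\<Union>I\<in>?S. ?F I) \<subseteq> {b\<in>Bs. card (b \<inter> b0) = i}"
    proof
      fix b assume "b \<in> (\<Union>I\<in>?S. ?F I)"
      then obtain I where "I \<in> ?S" "b \<in> ?F I" by blast
      then show "b \<in> {b\<in>Bs. card (b \<inter> b0) = i}" using iff[of I b] by auto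
    qed
  qed
  have "card (\<Union>I\<in>?S. ?F I) = (\<Sum>I\<in>?S. card (?F I))"
  proof (rule card_UN_disjoint)
    show "finite ?S" using finb[OF assms] by simp
    show "\<forall>i\<in>?S. finite (?F i)" using finB by simp
    show "\<forall>i\<in>?S. \<forall>j\<in>?S. i \<noteq> j \<longrightarrow> ?F i \<inter> ?F j = {}"
    proof (intro ballI impI)
      fix I I' assume "I \<in> ?S" "I' \<in> ?S" "I \<noteq> I'"
      then show "?F I \<inter> ?F I' = {}" using iff[of I] iff[of I'] by blast
    qed
  qed
  then have "real (card {b\<in>Bs. card (b \<inter> b0) = i}) = (\<Sum>I\<in>?S. real (card (?F I)))"
    using eq by simp
  also have "\<dots> = (\<Sum>I\<in>?S. lam t k n i (k - i))"
  proof (rule sum.cong[OF refl])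
    fix I assume I: "I \<in> ?S"
    have "finite I" using I finb[OF assms] finite_subset by blast
    then have "card (b0 - I) = k - i" using I blk[OF assms] by (simp add: card_Diff_subset)
    then show "real (card (?F I)) = lam t k n i (k - i)"
      using lam_count[OF assms, of "b0 - I" I] I by auto
  qed
  also have "\<dots> = Lam t k n i" using n_subsets[OF finb[OF assms]] blk[OF assms] by (simp add: Lam_def)
  finally show ?thesis .
qed

end



definition W :: "nat \<Rightarrow> nat \<Rightarrow> nat set \<Rightarrow> (nat \<Rightarrow> nat) set" where
  "W q n S = {x\<in>words q n. supp n x = S}"

lemma supp_sub: "supp n x \<subseteq> {..<n}" by (auto simp: supp_def)

lemma W_bij:
  assumes "S \<subseteq> {..<n}" "0 < q"
  shows "bij_betw (\<lambda>x. restrict x S) (W q n S) (PiE S (\<lambda>_. {1..<q}))"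
proof (rule bij_betw_byWitness[where f'="\<lambda>f i. if i \<in> S then f i else 0"])
  show "\<forall>x\<in>W q n S. (\<lambda>i. if i \<in> S then restrict x S i else 0) = x"
  proof
    fix x assume x: "x \<in> W q n S"
    show "(\<lambda>i. if i \<in> S then restrict x S i else 0) = x"
    proof
      fix i show "(if i \<in> S then restrict x S i else 0) = x i"
        using x unfolding W_def words_def supp_def by (cases "i < n") auto
    qed
  qed
  show "\<forall>f\<in>PiE S (\<lambda>_. {1..<q}). restrict (\<lambda>i. if i \<in> S then f i else 0) S = f"
    by (auto simp: PiE_def extensional_def restrict_def)
  show "(\<lambda>x. restrict x S) ` W q n S \<subseteq> PiE S (\<lambda>_. {1..<q})"
    using assms by (auto simp: W_def words_def supp_def)
  show "(\<lambda>f i. if i \<in> S then f i else 0) ` PiE S (\<lambda>_. {1..<q}) \<subseteq> W q n S"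
    using assms by (auto simp: W_def words_def supp_def PiE_def Pi_def split: if_splits)
qed

lemma W_card:
  assumes "S \<subseteq> {..<n}" "0 < q"
  shows "card (W q n S) = (q - 1) ^ card S" "finite (W q n S)"
proof -
  have fS: "finite S" using assms finite_subset by blast
  have "card (W q n S) = card (PiE S (\<lambda>_. {1..<q}))" using bij_betw_same_card[OF W_bij[OF assms(1,2)]] .
  then show "card (W q n S) = (q - 1) ^ card S" using fS by (simp add: card_PiE)
  show "finite (W q n S)" using bij_betw_finite[OF W_bij[OF assms(1,2)]] fS by (simp add: finite_PiE)
qed

lemma card_UW:
  assumes "0 < q" "\<And>S. S \<in> F \<Longrightarrow> S \<subseteq> {..<n} \<and> card S = w" "finite F"
  shows "card (\<Union>S\<in>F. W q n S) = card F * (q - 1) ^ w"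
proof -
  have "card (\<Union>S\<in>F. W q n S) = (\<Sum>S\<in>F. card (W q n S))"
    by (rule card_UN_disjoint) (use assms W_card in \<open>auto simp: W_def\<close>)
  also have "\<dots> = (\<Sum>S\<in>F. (q - 1) ^ w)" using assms W_card by simp
  finally show ?thesis by simp
qed

lemma J_card: assumes "0 < q" shows "card (J q n w) = (n choose w) * (q - 1) ^ w"
proof -
  have eq: "J q n w = (\<Union>S\<in>{S. S \<subseteq> {..<n} \<and> card S = w}. W q n S)"
    using supp_sub by (auto simp: J_def W_def wt_def)
  have "card (\<Union>S\<in>{S. S \<subseteq> {..<n} \<and> card S = w}. W q n S) = card {S. S \<subseteq> {..<n} \<and> card S = w} * (q - 1) ^ w"
    by (rule card_UW[OF assms]) auto
  then show ?thesis using eq by (simp add: n_subsets)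
qed

lemma A2_card:
  assumes "t \<le> n" "0 < q"
  shows "card (A2 q n w t) = ((n - t) choose w) * (q - 1) ^ w"
proof -
  have eq: "A2 q n w t = (\<Union>S\<in>{S. S \<subseteq> {t..<n} \<and> card S = w}. W q n S)"
  proof (rule set_eqI, rule iffI)
    fix x assume x: "x \<in> A2 q n w t"
    have x0: "\<forall>i<t. x i = 0" using x by (simp add: A2_def)
    have "supp n x = {i. t \<le> i \<and> i < n \<and> x i \<noteq> 0}"
    proof (rule set_eqI)
      fix i show "i \<in> supp n x \<longleftrightarrow> i \<in> {i. t \<le> i \<and> i < n \<and> x i \<noteq> 0}"
        using x0 by (cases "i < t") (auto simp: supp_def)
    qed
    then show "x \<in> (\<Union>S\<in>{S. S \<subseteq> {t..<n} \<and> card S = w}. W q n S)"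
      using x by (auto simp: A2_def W_def)
  next
    fix x assume "x \<in> (\<Union>S\<in>{S. S \<subseteq> {t..<n} \<and> card S = w}. W q n S)"
    then obtain S where S: "S \<subseteq> {t..<n}" "card S = w" "x \<in> words q n" "supp n x = S"
      by (auto simp: W_def)
    have "\<forall>i<t. x i = 0"
    proof (intro allI impI)
      fix i assume "i < t"
      show "x i = 0"
      proof (cases "i < n")
        case True
        then have "i \<notin> supp n x" using S \<open>i < t\<close> by auto
        then show ?thesis using True by (simp add: supp_def)
      next
        case False
        then show ?thesis using S(3) by (simp add: words_def)
      qed
    qed
    moreover have "{i. t \<le> i \<and> i < n \<and> x i \<noteq> 0} = S" using S by (auto simp: supp_def)
    ultimately show "x \<in> A2 q n w t" using S by (auto simp: A2_def)
  qed
  have "card (\<Union>S\<in>{S. S \<subseteq> {t..<n} \<and> card S = w}. W q n S) = card {S. S \<subseteq> {t..<n} \<and> card S = w} * (q - 1) ^ w"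
    by (rule card_UW[OF assms(2)]) auto
  moreover have "card {S. S \<subseteq> {t..<n} \<and> card S = w} = (n - t) choose w" by (simp add: n_subsets)
  ultimately show ?thesis using eq by simp
qed

lemma A2_J:
  assumes "x \<in> A2 q n w t"
  shows "x \<in> J q n w"
proof -
  have x0: "\<forall>i<t. x i = 0" using assms by (simp add: A2_def)
  have "supp n x = {i. t \<le> i \<and> i < n \<and> x i \<noteq> 0}"
  proof (rule set_eqI)
    fix i show "i \<in> supp n x \<longleftrightarrow> i \<in> {i. t \<le> i \<and> i < n \<and> x i \<noteq> 0}"
      using x0 by (cases "i < t") (auto simp: supp_def)
  qed
  then show ?thesis using assms by (simp add: A2_def J_def wt_def)
qed

lemma A2_hdist:
  assumes "x \<in> A2 q n w t" "y \<in> A2 q n w t"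
  shows "hdist n x y \<le> n - t"
proof -
  have "{i\<in>{..<n}. x i \<noteq> y i} \<subseteq> {t..<n}"
  proof
    fix i assume i: "i \<in> {i\<in>{..<n}. x i \<noteq> y i}"
    have "\<not> i < t" using i assms by (auto simp: A2_def)
    then show "i \<in> {t..<n}" using i by auto
  qed
  then have "card {i\<in>{..<n}. x i \<noteq> y i} \<le> card {t..<n}" by (rule card_mono[rotated]) simp
  then show ?thesis by (simp add: hdist_def)
qed



lemma consec_nonneg: "0 \<le> (z::int) * (z - 1)"
  by (cases "z \<le> 0") (auto intro: mult_nonneg_nonneg mult_nonpos_nonpos)

lemma card_sum_real:
  assumes "finite A"
  shows "real (card {x\<in>A. P x}) = (\<Sum>x\<in>A. if P x then 1 else 0)"
  using assms by (simp add: sum.If_cases Int_def)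

theorem mainTheorem16:
  fixes q n k t w :: nat and C :: "(nat \<Rightarrow> nat) set"
  assumes "0 < t" "t \<le> k" "k < n" "w = n - k"
    and "const_weight_code q n w (n - t + 1) C"
    and "real (card C) = real (n choose t) / real (k choose t)"
  shows "(diameter_perfect q n w (n - t + 1) C
           \<and> card C * card (A2 q n w t) = card (J q n w))
         \<and> steiner t k n {..<n} ((\<lambda>x. {..<n} - supp n x) ` C)
         \<and> (let R = real (n choose t) / real (k choose t)
                 - real ((n - 1) choose (t - 1)) / real ((k - 1) choose (t - 1));
             a = \<lfloor>R / (real q - 1)\<rfloor>;
             b = R - real_of_int a * (real q - 1);
             P = real (card C) / (2 * real n) * (\<Sum>i<t - 1. (real t - 1 - real i) * Lam t k n i)
         in (real q - 1) * (real_of_int a gchoose 2) + b * real_of_int a \<le> real_of_int \<lfloor>P\<rfloor>)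
         \<and> (let R = real (n choose t) / real (k choose t)
                 - real ((n - 1) choose (t - 1)) / real ((k - 1) choose (t - 1));
             P = real (card C) / (2 * real n) * (\<Sum>i<t - 1. (real t - 1 - real i) * Lam t k n i)
         in real q - 1 \<ge> R - real_of_int \<lfloor>P\<rfloor>)"
proof -
  note tpos = assms(1) and tk = assms(2) and kn = assms(3) and wdef = assms(4)
  have CJ: "C \<subseteq> J q n w" and dist: "\<And>x y. x \<in> C \<Longrightarrow> y \<in> C \<Longrightarrow> x \<noteq> y \<Longrightarrow> n - t + 1 \<le> hdist n x y"
    using assms(5) unfolding const_weight_code_def by auto
  have ckt: "0 < k choose t" using tk by simp
  have cnt: "0 < n choose t" using tk kn by simp
  have Mnat: "card C * (k choose t) = n choose t"
  proof -
    have "real (card C) * real (k choose t) = real (n choose t)" using assms(6) ckt by simp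
    then show ?thesis by (metis of_nat_eq_iff of_nat_mult)
  qed
  have cpos: "0 < card C" using Mnat cnt by (cases "card C") auto
  then have finC: "finite C" using card_ge_0_finite by blast
  obtain x0 where x0: "x0 \<in> C" using cpos by fastforce
  have q2: "2 \<le> q"
  proof -
    have "x0 \<in> words q n" "wt n x0 = w" using CJ x0 by (auto simp: J_def)
    moreover have "w > 0" using wdef kn by simp
    ultimately obtain i where "i < n" "x0 i \<noteq> 0" "x0 i < q"
      by (auto simp: wt_def supp_def words_def card_gt_0_iff)
    then show ?thesis by simp
  qed
  define blk where "blk x = {..<n} - supp n x" for x :: "nat \<Rightarrow> nat"
  have blk_eq: "\<And>x. blk x = {i. i < n \<and> x i = 0}" by (auto simp: blk_def supp_def)
  have card_blk: "\<And>x. x \<in> C \<Longrightarrow> card (blk x) = k"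
  proof -
    fix x assume "x \<in> C"
    then have "card (supp n x) = n - k" using CJ wdef by (auto simp: J_def wt_def)
    then show "card (blk x) = k" unfolding blk_def using supp_sub[of n x] kn
      by (simp add: card_Diff_subset finite_subset)
  qed
  define ag where "ag x y = card {i\<in>{..<n}. x i = y i \<and> x i \<noteq> 0}" for x y :: "nat \<Rightarrow> nat"
  have key: "\<And>x y. x \<in> C \<Longrightarrow> y \<in> C \<Longrightarrow> x \<noteq> y \<Longrightarrow> card (blk x \<inter> blk y) + ag x y \<le> t - 1"
  proof -
    fix x y assume xy: "x \<in> C" "y \<in> C" "x \<noteq> y"
    let ?D = "{i\<in>{..<n}. x i \<noteq> y i}" and ?F = "{i\<in>{..<n}. x i = y i \<and> x i \<noteq> 0}"
    have u: "?D \<union> (blk x \<inter> blk y) \<union> ?F = {..<n}" unfolding blk_eq by auto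
    have f1: "finite ?D" "finite (blk x \<inter> blk y)" "finite ?F" unfolding blk_eq by auto
    have c1: "card (?D \<union> (blk x \<inter> blk y)) = card ?D + card (blk x \<inter> blk y)"
      by (rule card_Un_disjoint) (use f1 in \<open>auto simp: blk_eq\<close>)
    have c2: "card (?D \<union> (blk x \<inter> blk y) \<union> ?F) = card (?D \<union> (blk x \<inter> blk y)) + card ?F"
      by (rule card_Un_disjoint) (use f1 in \<open>auto simp: blk_eq\<close>)
    have c3: "card (?D \<union> (blk x \<inter> blk y) \<union> ?F) = n" unfolding u by simp
    have "card ?D + card (blk x \<inter> blk y) + card ?F = n" using c1 c2 c3 by linarith
    moreover have "n - t + 1 \<le> card ?D" using dist[OF xy] by (simp add: hdist_def)
    ultimately show "card (blk x \<inter> blk y) + ag x y \<le> t - 1" using tk kn unfolding ag_def by linarith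
  qed
  have inj: "inj_on blk C"
  proof (rule inj_onI, rule ccontr)
    fix x y assume xy: "x \<in> C" "y \<in> C" "blk x = blk y" "x \<noteq> y"
    have "card (blk x \<inter> blk y) = k" using xy card_blk by simp
    then show False using key[OF xy(1,2,4)] tk tpos by linarith
  qed
  define Bs where "Bs = blk ` C"
  have cardBs: "card Bs = card C" unfolding Bs_def using card_image[OF inj] .
  have finBs: "finite Bs" unfolding Bs_def using finC by simp
  have Bsub: "\<And>b. b \<in> Bs \<Longrightarrow> b \<subseteq> {..<n} \<and> card b = k" unfolding Bs_def blk_def using card_blk
    by (auto simp: blk_def)
  have uniqT: "\<And>b b' T. b \<in> Bs \<Longrightarrow> b' \<in> Bs \<Longrightarrow> T \<subseteq> b \<Longrightarrow> T \<subseteq> b' \<Longrightarrow> card T = t \<Longrightarrow> b = b'"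
  proof (rule ccontr)
    fix b b' T assume a: "b \<in> Bs" "b' \<in> Bs" "T \<subseteq> b" "T \<subseteq> b'" "card T = t" "b \<noteq> b'"
    obtain x y where xy: "x \<in> C" "y \<in> C" "b = blk x" "b' = blk y" using a Bs_def by auto
    then have "x \<noteq> y" using a by auto
    have "finite (blk x \<inter> blk y)" by (simp add: blk_eq)
    then have "t \<le> card (blk x \<inter> blk y)" using card_mono[of "blk x \<inter> blk y" T] a xy by auto
    then show False using key[OF xy(1,2) \<open>x \<noteq> y\<close>] tpos by linarith
  qed
  have steiner: "steiner t k n {..<n} Bs"
    unfolding steiner_def
  proof (intro conjI allI impI)
    show "finite {..<n}" "card {..<n} = n" by auto
    show "\<forall>b\<in>Bs. b \<subseteq> {..<n} \<and> card b = k" using Bsub by blast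
    fix T assume T: "T \<subseteq> {..<n} \<and> card T = t"
    let ?Ts = "{T. T \<subseteq> {..<n} \<and> card T = t}"
    let ?U = "\<Union>b\<in>Bs. {T. T \<subseteq> b \<and> card T = t}"
    have "card ?U = (\<Sum>b\<in>Bs. card {T. T \<subseteq> b \<and> card T = t})"
    proof (rule card_UN_disjoint)
      show "finite Bs" by (rule finBs)
      show "\<forall>i\<in>Bs. finite {T. T \<subseteq> i \<and> card T = t}"
      proof
        fix b assume "b \<in> Bs"
        then have "finite b" using Bsub[of b] finite_subset[of b "{..<n}"] by simp
        then have "finite (Pow b)" by simp
        then show "finite {T. T \<subseteq> b \<and> card T = t}" by (rule finite_subset[rotated]) auto
      qed
      show "\<forall>i\<in>Bs. \<forall>j\<in>Bs. i \<noteq> j \<longrightarrow> {T. T \<subseteq> i \<and> card T = t} \<inter> {T. T \<subseteq> j \<and> card T = t} = {}"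
      proof (intro ballI impI)
        fix b b' assume bb: "b \<in> Bs" "b' \<in> Bs" "b \<noteq> b'"
        show "{T. T \<subseteq> b \<and> card T = t} \<inter> {T. T \<subseteq> b' \<and> card T = t} = {}"
        proof (rule ccontr)
          assume "{T. T \<subseteq> b \<and> card T = t} \<inter> {T. T \<subseteq> b' \<and> card T = t} \<noteq> {}"
          then obtain T where "T \<subseteq> b" "T \<subseteq> b'" "card T = t" by blast
          then show False using uniqT[OF bb(1,2)] bb(3) by blast
        qed
      qed
    qed
    also have "\<dots> = (\<Sum>b\<in>Bs. k choose t)"
    proof (rule sum.cong[OF refl])
      fix b assume "b \<in> Bs"
      then show "card {T. T \<subseteq> b \<and> card T = t} = k choose t"
      proof -
        have "finite b" "card b = k" using \<open>b \<in> Bs\<close> Bsub[of b] finite_subset[of b "{..<n}"] by simp_all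
        then show ?thesis using n_subsets[of b t] by simp
      qed
    qed
    also have "\<dots> = n choose t" using cardBs Mnat by simp
    finally have cU1: "card ?U = n choose t" .
    have "card ?Ts = n choose t" using n_subsets[of "{..<n}" t] by simp
    then have cU: "card ?U = card ?Ts" using cU1 by simp
    have "?U \<subseteq> ?Ts"
    proof
      fix T' assume "T' \<in> ?U"
      then obtain b where "b \<in> Bs" "T' \<subseteq> b" "card T' = t" by blast
      then show "T' \<in> ?Ts" using Bsub[of b] by blast
    qed
    then have "?U = ?Ts" using card_subset_eq[of ?Ts ?U] cU by (simp add: finite_subset)
    then have "T \<in> ?U" using T by blast
    then obtain b where b: "b \<in> Bs" "T \<subseteq> b" by blast
    show "\<exists>!b. b \<in> Bs \<and> T \<subseteq> b"
    proof (rule ex1I[of _ b])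
      show "b \<in> Bs \<and> T \<subseteq> b" using b by simp
      fix b' assume "b' \<in> Bs \<and> T \<subseteq> b'"
      then show "b' = b" using uniqT[of b' b T] b T by blast
    qed
  qed
  interpret S: stsys t k n "{..<n}" Bs using steiner tpos tk by unfold_locales auto
  have part1: "diameter_perfect q n w (n - t + 1) C \<and> card C * card (A2 q n w t) = card (J q n w)"
  proof -
    have cA: "card (A2 q n w t) = ((n - t) choose w) * (q - 1) ^ w" using A2_card tk kn q2 by simp
    have cJ: "card (J q n w) = (n choose w) * (q - 1) ^ w" using J_card q2 by simp
    have cm: "(n choose k) * (k choose t) = (n choose t) * ((n - t) choose (k - t))"
      using choose_mult[of t k n] tk kn by simp
    also have "\<dots> = (k choose t) * (card C * ((n - t) choose (k - t)))" using Mnat by (simp add: algebra_simps flip: Mnat)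
    finally have "n choose k = card C * ((n - t) choose (k - t))" using ckt by (simp add: mult.commute)
    moreover have "(n - t) choose (k - t) = (n - t) choose w"
      using binomial_symmetric[of "k - t" "n - t"] tk kn wdef by (simp add: diff_diff_eq)
    moreover have "n choose w = n choose k" using binomial_symmetric[of k n] kn wdef by simp
    ultimately have eq: "card C * card (A2 q n w t) = card (J q n w)" using cA cJ by simp
    have "anticode q n w (n - t) (A2 q n w t)"
      unfolding anticode_def using A2_J A2_hdist by blast
    then have "diameter_perfect q n w (n - t + 1) C"
      unfolding diameter_perfect_def using assms(5) eq tk kn by auto
    then show ?thesis using eq by simp
  qed
  have Bs_blk: "\<And>x. x \<in> C \<Longrightarrow> blk x \<in> Bs" unfolding Bs_def by simp
  have cardCtr: "\<And>P. card {x\<in>C. P (blk x)} = card {b\<in>Bs. P b}"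
  proof -
    fix P :: "nat set \<Rightarrow> bool"
    have "{b\<in>Bs. P b} = blk ` {x\<in>C. P (blk x)}" unfolding Bs_def by auto
    moreover have "inj_on blk {x\<in>C. P (blk x)}" using inj by (rule inj_on_subset) auto
    ultimately show "card {x\<in>C. P (blk x)} = card {b\<in>Bs. P b}" by (simp add: card_image)
  qed
  define R where "R = real (n choose t) / real (k choose t) - real ((n - 1) choose (t - 1)) / real ((k - 1) choose (t - 1))"
  define Sm where "Sm = (\<Sum>i<t - 1. (real t - 1 - real i) * Lam t k n i)"
  define P where "P = real (card C) / (2 * real n) * Sm"
  have Rci: "\<And>i. i < n \<Longrightarrow> real (card {x\<in>C. x i \<noteq> 0}) = R"
  proof -
    fix i assume i: "i < n"
    have c0: "card {b\<in>Bs. {i} \<subseteq> b} * ((k - 1) choose (t - 1)) = (n - 1) choose (t - 1)"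
      using S.count0[of "{i}"] i tpos by simp
    have ck1: "0 < (k - 1) choose (t - 1)" using tk by simp
    have "{x\<in>C. x i = 0} = {x\<in>C. {i} \<subseteq> blk x}" using i by (auto simp: blk_eq)
    then have c1: "card {x\<in>C. x i = 0} = card {b\<in>Bs. {i} \<subseteq> b}" using cardCtr by simp
    have "{x\<in>C. x i \<noteq> 0} = C - {x\<in>C. x i = 0}" by auto
    then have "card {x\<in>C. x i \<noteq> 0} = card C - card {x\<in>C. x i = 0}"
      using finC by (simp add: card_Diff_subset)
    moreover have "card {x\<in>C. x i = 0} \<le> card C" using finC by (simp add: card_mono)
    ultimately have "real (card {x\<in>C. x i \<noteq> 0}) = real (card C) - real (card {b\<in>Bs. {i} \<subseteq> b})"
      using c1 by (simp add: of_nat_diff)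
    moreover have "real (card {b\<in>Bs. {i} \<subseteq> b}) = real ((n - 1) choose (t - 1)) / real ((k - 1) choose (t - 1))"
      using c0 ck1 by (simp add: field_simps flip: of_nat_mult)
    ultimately show "real (card {x\<in>C. x i \<noteq> 0}) = R" unfolding R_def using assms(6) by simp
  qed
  define Pr where "Pr = Sigma C (\<lambda>x. C - {x})"
  have finPr: "finite Pr" unfolding Pr_def using finC by simp
  have stepA: "(\<Sum>p\<in>Pr. real (ag (fst p) (snd p))) = (\<Sum>i<n. real (card {p\<in>Pr. fst p i = snd p i \<and> fst p i \<noteq> 0}))"
  proof -
    have "(\<Sum>p\<in>Pr. real (ag (fst p) (snd p))) = (\<Sum>p\<in>Pr. \<Sum>i<n. if fst p i = snd p i \<and> fst p i \<noteq> 0 then 1 else 0)"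
      unfolding ag_def by (rule sum.cong[OF refl]) (rule card_sum_real, simp)
    also have "\<dots> = (\<Sum>i<n. \<Sum>p\<in>Pr. if fst p i = snd p i \<and> fst p i \<noteq> 0 then 1 else 0)"
      by (rule sum.swap)
    also have "\<dots> = (\<Sum>i<n. real (card {p\<in>Pr. fst p i = snd p i \<and> fst p i \<noteq> 0}))"
      by (rule sum.cong[OF refl]) (rule card_sum_real[symmetric], rule finPr)
    finally show ?thesis .
  qed
  have stepC: "(\<Sum>p\<in>Pr. real (ag (fst p) (snd p))) \<le> (\<Sum>p\<in>Pr. real t - 1 - real (card (blk (fst p) \<inter> blk (snd p))))"
  proof (rule sum_mono)
    fix p assume "p \<in> Pr"
    then have "fst p \<in> C" "snd p \<in> C" "fst p \<noteq> snd p" unfolding Pr_def by auto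
    from key[OF this] tpos show "real (ag (fst p) (snd p)) \<le> real t - 1 - real (card (blk (fst p) \<inter> blk (snd p)))"
      by linarith
  qed
  have inner: "\<And>x. x \<in> C \<Longrightarrow> (\<Sum>y\<in>C - {x}. real t - 1 - real (card (blk x \<inter> blk y))) = Sm"
  proof -
    fix x assume x: "x \<in> C"
    define h where "h y = card (blk y \<inter> blk x)" for y
    have hsub: "h ` (C - {x}) \<subseteq> {..<t}"
    proof
      fix j assume "j \<in> h ` (C - {x})"
      then obtain y where y: "y \<in> C" "y \<noteq> x" "j = h y" by auto
      have "card (blk x \<inter> blk y) \<le> t - 1" using key[OF x y(1)] y(2) by auto
      then show "j \<in> {..<t}" using y(3) tpos unfolding h_def by (simp add: Int_commute)
    qed
    have "(\<Sum>y\<in>C - {x}. real t - 1 - real (card (blk x \<inter> blk y))) = (\<Sum>y\<in>C - {x}. real t - 1 - real (h y))"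
      unfolding h_def by (simp add: Int_commute)
    also have "\<dots> = (\<Sum>j<t. \<Sum>y\<in>{y\<in>C - {x}. h y = j}. real t - 1 - real (h y))"
      by (rule sum.group[symmetric]) (use finC hsub in auto)
    also have "\<dots> = (\<Sum>j<t. (real t - 1 - real j) * Lam t k n j)"
    proof (rule sum.cong[OF refl])
      fix j assume j: "j \<in> {..<t}"
      have hx: "h x = k" unfolding h_def using card_blk[OF x] by simp
      have "{y\<in>C - {x}. h y = j} = {y\<in>C. h y = j}" using hx j tk by auto
      moreover have "real (card {y\<in>C. h y = j}) = Lam t k n j"
        unfolding h_def using cardCtr[of "\<lambda>b. card (b \<inter> blk x) = j"] S.Lam_count[OF Bs_blk[OF x], of j] by simp
      ultimately have "real (card {y\<in>C - {x}. h y = j}) = Lam t k n j" by simp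
      moreover have "(\<Sum>y\<in>{y\<in>C - {x}. h y = j}. real t - 1 - real (h y)) = (\<Sum>y\<in>{y\<in>C - {x}. h y = j}. real t - 1 - real j)"
        by (rule sum.cong) auto
      ultimately show "(\<Sum>y\<in>{y\<in>C - {x}. h y = j}. real t - 1 - real (h y)) = (real t - 1 - real j) * Lam t k n j"
        by (simp add: mult.commute)
    qed
    also have "\<dots> = Sm"
    proof -
      have "{..<t} = insert (t - 1) {..<t - 1}" using tpos by auto
      then show ?thesis unfolding Sm_def using tpos by (simp add: of_nat_diff)
    qed
    finally show "(\<Sum>y\<in>C - {x}. real t - 1 - real (card (blk x \<inter> blk y))) = Sm" .
  qed
  have stepD: "(\<Sum>p\<in>Pr. real t - 1 - real (card (blk (fst p) \<inter> blk (snd p)))) = real (card C) * Sm"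
  proof -
    have "(\<Sum>p\<in>Pr. real t - 1 - real (card (blk (fst p) \<inter> blk (snd p)))) =
          (\<Sum>x\<in>C. \<Sum>y\<in>C - {x}. real t - 1 - real (card (blk x \<inter> blk y)))"
      unfolding Pr_def by (subst sum.Sigma) (use finC in \<open>auto simp: split_def\<close>)
    also have "\<dots> = (\<Sum>x\<in>C. Sm)" by (rule sum.cong[OF refl]) (rule inner)
    finally show ?thesis by simp
  qed
  define a where "a = \<lfloor>R / (real q - 1)\<rfloor>"
  define bb where "bb = R - real_of_int a * (real q - 1)"
  define L where "L = (real q - 1) * (real_of_int a gchoose 2) + bb * real_of_int a"
  have L2: "2 * L = (real q - 1) * (real_of_int a * (real_of_int a - 1)) + 2 * real_of_int a * (R - real_of_int a * (real q - 1))"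
    unfolding L_def bb_def g2 by (simp add: field_simps)
  have stepB: "\<And>i. i < n \<Longrightarrow> 2 * L \<le> real (card {p\<in>Pr. fst p i = snd p i \<and> fst p i \<noteq> 0})"
  proof -
    fix i assume i: "i < n"
    let ?Ci = "{x\<in>C. x i \<noteq> 0}"
    define cv where "cv v = card {x\<in>C. x i = v}" for v
    have Eeq: "{p\<in>Pr. fst p i = snd p i \<and> fst p i \<noteq> 0} = Sigma ?Ci (\<lambda>x. {y\<in>C. y i = x i} - {x})"
      unfolding Pr_def by auto
    have "card (Sigma ?Ci (\<lambda>x. {y\<in>C. y i = x i} - {x})) = (\<Sum>x\<in>?Ci. card ({y\<in>C. y i = x i} - {x}))"
      using finC by (intro card_SigmaI) auto
    moreover have "(\<Sum>x\<in>?Ci. real (card ({y\<in>C. y i = x i} - {x}))) = (\<Sum>x\<in>?Ci. real (cv (x i)) - 1)"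
    proof (rule sum.cong[OF refl])
      fix x assume x: "x \<in> ?Ci"
      have f: "finite {y\<in>C. y i = x i}" using finC by simp
      have "x \<in> {y\<in>C. y i = x i}" using x by simp
      then have "card ({y\<in>C. y i = x i} - {x}) = cv (x i) - 1" "1 \<le> cv (x i)"
        unfolding cv_def using f by (simp, metis One_nat_def Suc_leI card_gt_0_iff empty_iff)
      then show "real (card ({y\<in>C. y i = x i} - {x})) = real (cv (x i)) - 1" by (simp add: of_nat_diff)
    qed
    ultimately have "real (card {p\<in>Pr. fst p i = snd p i \<and> fst p i \<noteq> 0}) = (\<Sum>x\<in>?Ci. real (cv (x i)) - 1)"
      unfolding Eeq by simp
    also have "\<dots> = (\<Sum>v\<in>{1..<q}. \<Sum>x\<in>{x\<in>?Ci. x i = v}. real (cv (x i)) - 1)"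
    proof (rule sum.group[symmetric])
      show "finite ?Ci" using finC by simp
      show "finite {1..<q}" by simp
      show "(\<lambda>x. x i) ` ?Ci \<subseteq> {1..<q}"
        using CJ i by (auto simp: J_def words_def)
    qed
    also have "\<dots> = (\<Sum>v\<in>{1..<q}. real (cv v) * (real (cv v) - 1))"
    proof (rule sum.cong[OF refl])
      fix v assume v: "v \<in> {1..<q}"
      have "{x\<in>?Ci. x i = v} = {x\<in>C. x i = v}" using v by auto
      then show "(\<Sum>x\<in>{x\<in>?Ci. x i = v}. real (cv (x i)) - 1) = real (cv v) * (real (cv v) - 1)"
        unfolding cv_def by simp
    qed
    finally have E1: "real (card {p\<in>Pr. fst p i = snd p i \<and> fst p i \<noteq> 0}) = (\<Sum>v\<in>{1..<q}. real (cv v) * (real (cv v) - 1))" .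
    have "real (card ?Ci) = (\<Sum>x\<in>?Ci. 1)" by simp
    also have "\<dots> = (\<Sum>v\<in>{1..<q}. \<Sum>x\<in>{x\<in>?Ci. x i = v}. 1)"
    proof (rule sum.group[symmetric])
      show "finite ?Ci" using finC by simp
      show "finite {1..<q}" by simp
      show "(\<lambda>x. x i) ` ?Ci \<subseteq> {1..<q}"
        using CJ i by (auto simp: J_def words_def)
    qed
    also have "\<dots> = (\<Sum>v\<in>{1..<q}. real (cv v))"
    proof (rule sum.cong[OF refl])
      fix v assume v: "v \<in> {1..<q}"
      have "{x\<in>?Ci. x i = v} = {x\<in>C. x i = v}" using v by auto
      then show "(\<Sum>x\<in>{x\<in>?Ci. x i = v}. 1) = real (cv v)" unfolding cv_def by simp
    qed
    finally have sumcv: "(\<Sum>v\<in>{1..<q}. real (cv v)) = R" using Rci[OF i] by simp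
    have pw: "\<And>v. real_of_int a * (real_of_int a - 1) + 2 * real_of_int a * (real (cv v) - real_of_int a) \<le> real (cv v) * (real (cv v) - 1)"
    proof -
      fix v
      have "0 \<le> real_of_int ((int (cv v) - a) * (int (cv v) - a - 1))"
        by (simp only: of_int_0_le_iff) (rule consec_nonneg)
      then have "0 \<le> (real (cv v) - real_of_int a) * (real (cv v) - real_of_int a - 1)"
        by (simp only: of_int_mult of_int_diff of_int_of_nat_eq of_int_1)
      then show "real_of_int a * (real_of_int a - 1) + 2 * real_of_int a * (real (cv v) - real_of_int a) \<le> real (cv v) * (real (cv v) - 1)"
        by (simp add: algebra_simps)
    qed
    have "(\<Sum>v\<in>{1..<q}. real_of_int a * (real_of_int a - 1) + 2 * real_of_int a * (real (cv v) - real_of_int a))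
        \<le> (\<Sum>v\<in>{1..<q}. real (cv v) * (real (cv v) - 1))" by (rule sum_mono) (rule pw)
    moreover have "(\<Sum>v\<in>{1..<q}. real_of_int a * (real_of_int a - 1) + 2 * real_of_int a * (real (cv v) - real_of_int a))
        = (\<Sum>v\<in>{1..<q}. (real_of_int a * (real_of_int a - 1) - 2 * real_of_int a * real_of_int a) + 2 * real_of_int a * real (cv v))"
      by (rule sum.cong[OF refl]) (simp add: algebra_simps)
    moreover have "\<dots> = real (card {1..<q}) * (real_of_int a * (real_of_int a - 1) - 2 * real_of_int a * real_of_int a)
         + 2 * real_of_int a * (\<Sum>v\<in>{1..<q}. real (cv v))"
      by (simp add: sum.distrib sum_distrib_left)
    moreover have "real (card {1..<q}) = real q - 1" using q2 by (simp add: of_nat_diff)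
    ultimately show "2 * L \<le> real (card {p\<in>Pr. fst p i = snd p i \<and> fst p i \<noteq> 0})"
      using E1 sumcv L2 by (simp add: algebra_simps)
  qed
  have npos: "0 < n" using kn by simp
  have LleP: "L \<le> P"
  proof -
    have "real n * (2 * L) = (\<Sum>i<n. 2 * L)" by simp
    also have "\<dots> \<le> (\<Sum>i<n. real (card {p\<in>Pr. fst p i = snd p i \<and> fst p i \<noteq> 0}))"
      by (rule sum_mono) (rule stepB, simp)
    also have "\<dots> \<le> real (card C) * Sm" using stepA stepC stepD by simp
    also have "\<dots> = real n * (2 * P)" unfolding P_def using npos by simp
    finally have "real n * (2 * L) \<le> real n * (2 * P)" .
    then show ?thesis using npos by simp
  qed
  define c0 where "c0 = card {x\<in>C. x 0 \<noteq> 0}"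
  have Rc0: "R = real c0" unfolding c0_def using Rci[OF npos] by simp
  define Lz where "Lz = (int q - 1) * ((a * (a - 1)) div 2) + (int c0 - a * (int q - 1)) * a"
  have ev: "2 dvd a * (a - 1)" by (cases "even a") auto
  have Lz: "L = real_of_int Lz"
  proof -
    have hD: "real_of_int ((a * (a - 1)) div 2) = real_of_int a * (real_of_int a - 1) / 2"
      using of_int_div[OF ev, where 'a=real] by simp
    have "real_of_int Lz = (real q - 1) * (real_of_int a * (real_of_int a - 1) / 2) + (real c0 - real_of_int a * (real q - 1)) * real_of_int a"
      unfolding Lz_def by (simp only: of_int_add of_int_mult of_int_diff hD of_int_of_nat_eq of_int_1)
    then show ?thesis unfolding L_def bb_def g2 Rc0 by simp
  qed
  have Lfl: "L \<le> real_of_int \<lfloor>P\<rfloor>"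
  proof -
    have "Lz \<le> \<lfloor>P\<rfloor>" using LleP Lz by (simp add: le_floor_iff)
    then show ?thesis using Lz by simp
  qed
  have LR: "R - (real q - 1) \<le> L"
  proof -
    define Q where "Q = real q - 1"
    have Qpos: "0 < Q" unfolding Q_def using q2 by simp
    have R0: "0 \<le> R" using Rc0 by simp
    have a0: "0 \<le> a" unfolding a_def Q_def[symmetric] using R0 Qpos by simp
    have fl1: "real_of_int a \<le> R / Q" unfolding a_def Q_def[symmetric] by (rule of_int_floor_le)
    have fl2: "R / Q < real_of_int a + 1" unfolding a_def Q_def[symmetric] by (rule real_of_int_floor_add_one_gt)
    have b0: "0 \<le> bb" unfolding bb_def Q_def[symmetric] using fl1 Qpos by (simp add: field_simps)
    have bQ: "bb < Q" unfolding bb_def Q_def[symmetric] using fl2 Qpos by (simp add: field_simps)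
    have Req: "R = real_of_int a * Q + bb" unfolding bb_def Q_def by simp
    have key2: "2 * L - 2 * (R - Q) = (real_of_int a - 1) * (Q * (real_of_int a - 2) + 2 * bb)"
      using L2 Req unfolding Q_def[symmetric] by (simp add: algebra_simps)
    have "0 \<le> (real_of_int a - 1) * (Q * (real_of_int a - 2) + 2 * bb)"
    proof (cases "a = 0")
      case True
      then show ?thesis using bQ by simp
    next
      case False
      then have "1 \<le> a" using a0 by simp
      show ?thesis
      proof (cases "a = 1")
        case True then show ?thesis by simp
      next
        case False
        then have "2 \<le> a" using \<open>1 \<le> a\<close> by simp
        then have "0 \<le> real_of_int a - 1" "0 \<le> Q * (real_of_int a - 2) + 2 * bb"
          using Qpos b0 by simp_all
        then show ?thesis by (rule mult_nonneg_nonneg)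
      qed
    qed
    then show ?thesis using key2 unfolding Q_def by simp
  qed
  have BsC: "Bs = (\<lambda>x. {..<n} - supp n x) ` C" unfolding Bs_def by (rule image_cong) (simp_all add: blk_def)
  show ?thesis
    unfolding Let_def R_def[symmetric] Sm_def[symmetric] P_def[symmetric] a_def[symmetric] bb_def[symmetric] L_def[symmetric]
    using part1 steiner Lfl LR BsC by simp
qed
end
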